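(* Let $n \in \mathbb{N}$ and let $K \subset \mathbb{C}$ be compact. The mapping $\mathcal{Q}_n: (H^2)^* \rightarrow C(K)$ which takes a function $f$ to $Q_n(1/f)$ is continuous (with the $H^2$ norm topology on $(H^2)^*$ and the uniform topology on $C(K)$).
   Context: $H^2$ is the Hardy space on the unit disc with norm $\|\sum_k a_kz^k\|_{H^2}^2=\sum_k|a_k|^2$, and $(H^2)^*=H^2\setminus\{0\}$. For $f\in (H^2)^*$, the optimal polynomial approximant $Q_n(1/f)$ is the unique polynomial of degree at most $n$ minimizing $\|qf-1\|_{H^2}$ over all polynomials $q$ of degree at most $n$. $C(K)$ is the space of continuous functions on $K$ with the sup norm. *)

theory Defs
  imports "HOL-Analysis.Analysis" "HOL-Computational_Algebra.Polynomial"
begin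

text \<open>Elements of H^2 are represented by their Taylor coefficient sequences.\<close>

definition H2 :: "(nat \<Rightarrow> complex) set" where
  "H2 = {a. summable (\<lambda>k. (cmod (a k))^2)}"

definition H2_star :: "(nat \<Rightarrow> complex) set" where
  "H2_star = H2 - {(\<lambda>_. 0)}"

definition h2norm :: "(nat \<Rightarrow> complex) \<Rightarrow> real" where
  "h2norm a = sqrt (\<Sum>k. (cmod (a k))^2)"

definition poly_times_H2 :: "complex poly \<Rightarrow> (nat \<Rightarrow> complex) \<Rightarrow> (nat \<Rightarrow> complex)" where
  "poly_times_H2 q a = (\<lambda>k. \<Sum>j\<le>k. coeff q j * a (k - j))"

definition H2_one :: "nat \<Rightarrow> complex" where
  "H2_one = (\<lambda>k. if k = 0 then 1 else 0)"

text \<open>The optimal polynomial approximant Q_n(1/f): the unique polynomial of degree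
  at most n minimizing the H^2 norm of q f - 1.\<close>
definition opa :: "nat \<Rightarrow> (nat \<Rightarrow> complex) \<Rightarrow> complex poly" where
  "opa n f = (THE q. degree q \<le> n \<and>
      (\<forall>p. degree p \<le> n \<longrightarrow>
         h2norm (\<lambda>k. poly_times_H2 q f k - H2_one k) \<le> h2norm (\<lambda>k. poly_times_H2 p f k - H2_one k)))"

end

theory Submission
  imports Defs
begin


lemma h2_bnd:
  assumes "\<And>N. (\<Sum>k<N. (cmod (a k))^2) \<le> B^2" "0 \<le> B"
  shows "a \<in> H2" "h2norm a \<le> B"
proof -
  have s: "summable (\<lambda>k. (cmod (a k))^2)"
    by (rule summableI_nonneg_bounded[where x="B^2"]) (use assms in auto)
  then show "a \<in> H2" by (simp add: H2_def)
  have "(\<Sum>k. (cmod (a k))^2) \<le> B^2"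
    by (rule suminf_le_const[OF s]) (use assms in auto)
  moreover have "0 \<le> (\<Sum>k. (cmod (a k))^2)" using suminf_nonneg[OF s] by simp
  ultimately show "h2norm a \<le> B" unfolding h2norm_def
    using assms(2) real_le_lsqrt by auto
qed

lemma h2_sq: "a \<in> H2 \<Longrightarrow> (h2norm a)^2 = (\<Sum>k. (cmod (a k))^2)"
proof -
  assume "a \<in> H2"
  then have "summable (\<lambda>k. (cmod (a k))^2)" by (simp add: H2_def)
  then have "0 \<le> (\<Sum>k. (cmod (a k))^2)" by (rule suminf_nonneg) simp
  then show ?thesis by (simp add: h2norm_def)
qed

lemma h2_nonneg: "a \<in> H2 \<Longrightarrow> 0 \<le> h2norm a"
proof -
  assume "a \<in> H2"
  then have "summable (\<lambda>k. (cmod (a k))^2)" by (simp add: H2_def)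
  then have "0 \<le> (\<Sum>k. (cmod (a k))^2)" by (rule suminf_nonneg) simp
  then show ?thesis by (simp add: h2norm_def)
qed

lemma h2_partial: 
  assumes "a \<in> H2" shows "(\<Sum>k<N. (cmod (a k))^2) \<le> (h2norm a)^2"
  using assms unfolding h2_sq[OF assms] H2_def by (auto intro: sum_le_suminf)

lemma h2_L2: 
  assumes "a \<in> H2" shows "L2_set (\<lambda>k. cmod (a k)) {..<N} \<le> h2norm a"
proof -
  have "sqrt (\<Sum>k<N. (cmod (a k))^2) \<le> sqrt ((h2norm a)^2)"
    using h2_partial[OF assms, of N] by (rule real_sqrt_le_mono)
  then show ?thesis unfolding L2_set_def using h2_nonneg[OF assms] by simp
qed

lemma h2_coeff: 
  assumes "a \<in> H2" shows "cmod (a k) \<le> h2norm a"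
proof -
  have "cmod (a k) \<le> L2_set (\<lambda>k. cmod (a k)) {..<Suc k}"
    by (rule member_le_L2_set) auto
  then show ?thesis using h2_L2[OF assms, of "Suc k"] by linarith
qed

lemma h2_bnd_L2:
  assumes "\<And>N. L2_set (\<lambda>k. cmod (a k)) {..<N} \<le> B"
  shows "a \<in> H2" "h2norm a \<le> B"
proof -
  have B: "0 \<le> B" using assms[of 0] by simp
  have "\<And>N. (\<Sum>k<N. (cmod (a k))^2) \<le> B^2"
  proof -
    fix N
    have "sqrt (\<Sum>k<N. (cmod (a k))^2) \<le> B" using assms[of N] by (simp add: L2_set_def)
    then show "(\<Sum>k<N. (cmod (a k))^2) \<le> B^2"
      by (metis B real_sqrt_le_iff real_sqrt_unique zero_le_power2)
  qed
  then show "a \<in> H2" "h2norm a \<le> B" using h2_bnd B by auto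
qed

lemma h2_add:
  assumes "a \<in> H2" "b \<in> H2"
  shows "(\<lambda>k. a k + b k) \<in> H2" "h2norm (\<lambda>k. a k + b k) \<le> h2norm a + h2norm b"
proof -
  have "L2_set (\<lambda>k. cmod (a k + b k)) {..<N} \<le> h2norm a + h2norm b" for N
  proof -
    have "L2_set (\<lambda>k. cmod (a k + b k)) {..<N} \<le> L2_set (\<lambda>k. cmod (a k) + cmod (b k)) {..<N}"
      by (rule L2_set_mono) (auto simp: norm_triangle_ineq)
    also have "\<dots> \<le> L2_set (\<lambda>k. cmod (a k)) {..<N} + L2_set (\<lambda>k. cmod (b k)) {..<N}"
      by (rule L2_set_triangle_ineq)
    also have "\<dots> \<le> h2norm a + h2norm b" using h2_L2 assms by (meson add_mono)
    finally show ?thesis .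
  qed
  then show "(\<lambda>k. a k + b k) \<in> H2" by (rule h2_bnd_L2(1))
  show "h2norm (\<lambda>k. a k + b k) \<le> h2norm a + h2norm b" by (rule h2_bnd_L2(2)) fact
qed

lemma h2_scale:
  assumes "a \<in> H2"
  shows "(\<lambda>k. c * a k) \<in> H2" "h2norm (\<lambda>k. c * a k) = cmod c * h2norm a"
proof -
  have s: "summable (\<lambda>k. (cmod (a k))^2)" using assms by (simp add: H2_def)
  have e: "(\<lambda>k. (cmod (c * a k))^2) = (\<lambda>k. (cmod c)^2 * (cmod (a k))^2)"
    by (simp add: norm_mult power_mult_distrib)
  show "(\<lambda>k. c * a k) \<in> H2" unfolding H2_def using s e by (simp add: summable_mult)
  have "h2norm (\<lambda>k. c * a k) = sqrt ((cmod c)^2 * (\<Sum>k. (cmod (a k))^2))"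
    unfolding h2norm_def e using suminf_mult[OF s] by simp
  also have "\<dots> = cmod c * h2norm a" by (simp add: h2norm_def real_sqrt_mult)
  finally show "h2norm (\<lambda>k. c * a k) = cmod c * h2norm a" .
qed

lemma h2_uminus: "a \<in> H2 \<Longrightarrow> (\<lambda>k. - a k) \<in> H2 \<and> h2norm (\<lambda>k. - a k) = h2norm a"
  using h2_scale[of a "-1"] by simp

lemma h2_diff:
  assumes "a \<in> H2" "b \<in> H2"
  shows "(\<lambda>k. a k - b k) \<in> H2" "h2norm (\<lambda>k. a k - b k) \<le> h2norm a + h2norm b"
  using h2_add[OF assms(1) h2_uminus[OF assms(2), THEN conjunct1]] h2_uminus[OF assms(2)]
  by auto

lemma h2_commute: "h2norm (\<lambda>k. a k - b k) = h2norm (\<lambda>k. b k - a k)"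
  unfolding h2norm_def by (simp add: norm_minus_commute)

lemma h2_zero: "h2norm (\<lambda>k. 0) = 0" by (simp add: h2norm_def)
lemma h2_zeroI: "(\<lambda>k. 0) \<in> H2" by (simp add: H2_def)

lemma h2_one: "H2_one \<in> H2" "h2norm H2_one = 1"
proof -
  have e: "(\<lambda>k. (cmod (H2_one k))^2) = (\<lambda>k. if k = 0 then 1 else 0)"
    by (auto simp: H2_one_def)
  have "(\<lambda>k. (if k = 0 then 1 else 0)::real) sums 1"
    using sums_single[of 0 "\<lambda>_. 1::real"] by simp
  then have "(\<lambda>k. (cmod (H2_one k))^2) sums 1" by (simp only: e)
  then show "H2_one \<in> H2" "h2norm H2_one = 1"
    unfolding H2_def h2norm_def by (auto simp: sums_iff)
qed

lemma h2_parallel: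
  assumes "a \<in> H2" "b \<in> H2"
  shows "(h2norm (\<lambda>k. a k + b k))^2 + (h2norm (\<lambda>k. a k - b k))^2
         = 2 * (h2norm a)^2 + 2 * (h2norm b)^2"
proof -
  have sa: "summable (\<lambda>k. (cmod (a k))^2)" "summable (\<lambda>k. (cmod (b k))^2)"
    using assms by (auto simp: H2_def)
  have p: "(\<lambda>k. a k + b k) \<in> H2" "(\<lambda>k. a k - b k) \<in> H2" using h2_add h2_diff assms by auto
  then have sp: "summable (\<lambda>k. (cmod (a k + b k))^2)" "summable (\<lambda>k. (cmod (a k - b k))^2)"
    by (auto simp: H2_def)
  have pt: "(cmod (x + y))^2 + (cmod (x - y))^2 = 2 * (cmod x)^2 + 2 * (cmod y)^2" for x y :: complex
    unfolding cmod_power2 by (simp add: power2_eq_square algebra_simps)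
  have "(h2norm (\<lambda>k. a k + b k))^2 + (h2norm (\<lambda>k. a k - b k))^2
     = (\<Sum>k. (cmod (a k + b k))^2 + (cmod (a k - b k))^2)"
    using h2_sq[OF p(1)] h2_sq[OF p(2)] suminf_add[OF sp] by simp
  also have "\<dots> = (\<Sum>k. 2 * (cmod (a k))^2 + 2 * (cmod (b k))^2)" by (simp add: pt)
  also have "\<dots> = 2 * (h2norm a)^2 + 2 * (h2norm b)^2"
    using suminf_add[OF summable_mult[OF sa(1), of 2] summable_mult[OF sa(2), of 2]]
      suminf_mult[OF sa(1), of 2] suminf_mult[OF sa(2), of 2] h2_sq[OF assms(1)] h2_sq[OF assms(2)]
    by simp
  finally show ?thesis .
qed




definition sh :: "nat \<Rightarrow> (nat \<Rightarrow> complex) \<Rightarrow> nat \<Rightarrow> complex" where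
  "sh j a = (\<lambda>k. if j \<le> k then a (k - j) else 0)"

lemma sh_partial: "(\<Sum>k<N. (cmod (sh j a k))^2) = (\<Sum>i<N - j. (cmod (a i))^2)"
proof (induction N)
  case 0 then show ?case by simp
next
  case (Suc N)
  show ?case
  proof (cases "j \<le> N")
    case True
    then have "Suc N - j = Suc (N - j)" by simp
    then show ?thesis using Suc True by (simp add: sh_def)
  next
    case False
    then have "Suc N - j = 0" "N - j = 0" by simp_all
    then show ?thesis using Suc False by (simp add: sh_def)
  qed
qed

lemma sh_H2: assumes "a \<in> H2" shows "sh j a \<in> H2" "h2norm (sh j a) \<le> h2norm a"
proof -
  have "(\<Sum>k<N. (cmod (sh j a k))^2) \<le> (h2norm a)^2" for N
    using h2_partial[OF assms, of "N - j"] by (simp add: sh_partial)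
  then show "sh j a \<in> H2" by (rule h2_bnd(1)[OF _ h2_nonneg[OF assms]])
  show "h2norm (sh j a) \<le> h2norm a" by (rule h2_bnd(2)[OF _ h2_nonneg[OF assms]]) fact
qed

lemma h2_sum:
  assumes "finite A" "\<And>j. j \<in> A \<Longrightarrow> x j \<in> H2"
  shows "(\<lambda>k. \<Sum>j\<in>A. c j * x j k) \<in> H2 \<and>
         h2norm (\<lambda>k. \<Sum>j\<in>A. c j * x j k) \<le> (\<Sum>j\<in>A. cmod (c j) * h2norm (x j))"
  using assms
proof (induction A rule: finite_induct)
  case empty
  then show ?case using h2_zero h2_zeroI by simp
next
  case (insert i F)
  have xi: "x i \<in> H2" using insert by simp
  have IH: "(\<lambda>k. \<Sum>j\<in>F. c j * x j k) \<in> H2"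
      "h2norm (\<lambda>k. \<Sum>j\<in>F. c j * x j k) \<le> (\<Sum>j\<in>F. cmod (c j) * h2norm (x j))"
    using insert by auto
  have e: "(\<lambda>k. \<Sum>j\<in>insert i F. c j * x j k) = (\<lambda>k. c i * x i k + (\<Sum>j\<in>F. c j * x j k))"
    using insert by simp
  show ?case unfolding e
    using h2_add[OF h2_scale(1)[OF xi, of "c i"] IH(1)] h2_scale(2)[OF xi, of "c i"] IH(2) insert
    by auto
qed

lemma pt_sh:
  assumes "degree p \<le> n"
  shows "poly_times_H2 p a = (\<lambda>k. \<Sum>j\<le>n. coeff p j * sh j a k)"
proof
  fix k
  have "poly_times_H2 p a k = (\<Sum>j\<le>n+k. if j \<le> k then coeff p j * a (k - j) else 0)"
    unfolding poly_times_H2_def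
    by (rule sum.mono_neutral_cong_left) auto
  also have "\<dots> = (\<Sum>j\<le>n+k. coeff p j * sh j a k)"
    by (rule sum.cong) (auto simp: sh_def)
  also have "\<dots> = (\<Sum>j\<le>n. coeff p j * sh j a k)"
    using assms by (intro sum.mono_neutral_cong_right) (auto simp: coeff_eq_0)
  finally show "poly_times_H2 p a k = (\<Sum>j\<le>n. coeff p j * sh j a k)" .
qed

definition Lnrm :: "nat \<Rightarrow> complex poly \<Rightarrow> real" where
  "Lnrm n p = (\<Sum>j\<le>n. cmod (coeff p j))"

lemma Ln_nonneg: "0 \<le> Lnrm n p" by (simp add: Lnrm_def sum_nonneg)

lemma pt_bound:
  assumes "a \<in> H2" "degree p \<le> n"
  shows "poly_times_H2 p a \<in> H2" "h2norm (poly_times_H2 p a) \<le> Lnrm n p * h2norm a"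
proof -
  have h: "(\<lambda>k. \<Sum>j\<le>n. coeff p j * sh j a k) \<in> H2 \<and>
         h2norm (\<lambda>k. \<Sum>j\<le>n. coeff p j * sh j a k) \<le> (\<Sum>j\<le>n. cmod (coeff p j) * h2norm (sh j a))"
    by (rule h2_sum) (auto intro: sh_H2 assms)
  have "(\<Sum>j\<le>n. cmod (coeff p j) * h2norm (sh j a)) \<le> (\<Sum>j\<le>n. cmod (coeff p j) * h2norm a)"
    by (intro sum_mono mult_left_mono sh_H2 assms) auto
  also have "\<dots> = Lnrm n p * h2norm a" by (simp add: Lnrm_def sum_distrib_right)
  finally show "poly_times_H2 p a \<in> H2" "h2norm (poly_times_H2 p a) \<le> Lnrm n p * h2norm a"
    using h pt_sh[OF assms(2)] by auto
qed

lemma pt_H2: "a \<in> H2 \<Longrightarrow> poly_times_H2 p a \<in> H2"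
  using pt_bound(1)[of a p "degree p"] by simp

lemma pt_add: "poly_times_H2 (p + q) a = (\<lambda>k. poly_times_H2 p a k + poly_times_H2 q a k)"
  by (simp add: poly_times_H2_def sum.distrib algebra_simps)
lemma pt_diff: "poly_times_H2 (p - q) a = (\<lambda>k. poly_times_H2 p a k - poly_times_H2 q a k)"
  by (simp add: poly_times_H2_def sum_subtractf algebra_simps)
lemma pt_smult: "poly_times_H2 (smult c p) a = (\<lambda>k. c * poly_times_H2 p a k)"
  by (simp add: poly_times_H2_def sum_distrib_left algebra_simps)
lemma pt_diff2: "poly_times_H2 p (\<lambda>k. a k - b k) = (\<lambda>k. poly_times_H2 p a k - poly_times_H2 p b k)"
  by (simp add: poly_times_H2_def sum_subtractf algebra_simps)
lemma pt_zero: "poly_times_H2 0 a = (\<lambda>k. 0)"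
  by (simp add: poly_times_H2_def)



lemma pt_shift_identity:
  assumes "\<And>i. i < m \<Longrightarrow> f i = 0"
  shows "poly_times_H2 p f (m + k) = coeff p k * f m + (\<Sum>j<k. coeff p j * f (m + k - j))"
proof -
  have "poly_times_H2 p f (m + k) = (\<Sum>j\<le>k. coeff p j * f (m + k - j))"
  proof -
    have z: "\<forall>j\<in>{..m + k} - {..k}. coeff p j * f (m + k - j) = 0"
    proof
      fix j assume "j \<in> {..m + k} - {..k}"
      then have "m + k - j < m" by auto
      then show "coeff p j * f (m + k - j) = 0" using assms by simp
    qed
    show ?thesis unfolding poly_times_H2_def
      using sum.mono_neutral_right[of "{..m + k}" "{..k}", OF _ _ z] by auto
  qed
  also have "\<dots> = coeff p k * f m + (\<Sum>j<k. coeff p j * f (m + k - j))"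
    by (simp add: lessThan_Suc_atMost[symmetric])
  finally show ?thesis .
qed

lemma coeff_lower:
  assumes f: "f \<in> H2" "f \<noteq> (\<lambda>_. 0)"
  shows "\<exists>C\<ge>0. \<forall>p. cmod (coeff p k) \<le> C * h2norm (poly_times_H2 p f)"
proof -
  obtain m where fm: "f m \<noteq> 0" and fz: "\<And>i. i < m \<Longrightarrow> f i = 0"
  proof -
    have ex: "\<exists>i. f i \<noteq> 0" using f(2) by auto
    define m where "m = (LEAST i. f i \<noteq> 0)"
    have "f m \<noteq> 0" unfolding m_def by (rule LeastI_ex[OF ex])
    moreover have "\<And>i. i < m \<Longrightarrow> f i = 0" unfolding m_def using not_less_Least by blast
    ultimately show ?thesis using that by blast
  qed
  have fmpos: "cmod (f m) > 0" using fm by simp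
  show ?thesis
  proof (induction k rule: less_induct)
    case (less k)
    then have "\<forall>j\<in>{..<k}. \<exists>C\<ge>0. \<forall>p. cmod (coeff p j) \<le> C * h2norm (poly_times_H2 p f)" by auto
    then obtain Cf where Cf: "\<And>j. j < k \<Longrightarrow> Cf j \<ge> 0 \<and> (\<forall>p. cmod (coeff p j) \<le> Cf j * h2norm (poly_times_H2 p f))"
      by (metis lessThan_iff)
    define S where "S = (\<Sum>j<k. Cf j * cmod (f (m + k - j)))"
    have S0: "S \<ge> 0" unfolding S_def using Cf by (auto intro!: sum_nonneg)
    define C where "C = (1 + S) / cmod (f m)"
    have "\<forall>p. cmod (coeff p k) \<le> C * h2norm (poly_times_H2 p f)"
    proof
      fix p
      define h where "h = h2norm (poly_times_H2 p f)"
      have pH: "poly_times_H2 p f \<in> H2" using pt_H2[OF f(1)] .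
      have h0: "h \<ge> 0" unfolding h_def using h2_nonneg[OF pH] .
      have e: "coeff p k * f m = poly_times_H2 p f (m + k) - (\<Sum>j<k. coeff p j * f (m + k - j))"
        using pt_shift_identity[OF fz] by simp
      have "cmod (coeff p k) * cmod (f m) = cmod (poly_times_H2 p f (m + k) - (\<Sum>j<k. coeff p j * f (m + k - j)))"
        using e by (metis norm_mult)
      also have "\<dots> \<le> cmod (poly_times_H2 p f (m + k)) + cmod (\<Sum>j<k. coeff p j * f (m + k - j))"
        by (rule norm_triangle_ineq4)
      also have "\<dots> \<le> h + (\<Sum>j<k. cmod (coeff p j) * cmod (f (m + k - j)))"
        unfolding h_def
        by (intro add_mono h2_coeff[OF pH] order_trans[OF norm_sum]) (simp add: norm_mult)
      also have "\<dots> \<le> h + (\<Sum>j<k. (Cf j * h) * cmod (f (m + k - j)))"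
        using Cf unfolding h_def by (intro add_mono sum_mono mult_right_mono) auto
      also have "\<dots> = (1 + S) * h"
        unfolding S_def distrib_right sum_distrib_right by (simp add: mult_ac)
      finally have "cmod (coeff p k) * cmod (f m) \<le> (1 + S) * h" .
      then show "cmod (coeff p k) \<le> C * h2norm (poly_times_H2 p f)"
        unfolding C_def h_def[symmetric] using fmpos by (simp add: field_simps)
    qed
    moreover have "C \<ge> 0" unfolding C_def using S0 by simp
    ultimately show ?case by blast
  qed
qed

lemma Ln_lower:
  assumes f: "f \<in> H2" "f \<noteq> (\<lambda>_. 0)"
  shows "\<exists>C\<ge>0. \<forall>p. Lnrm n p \<le> C * h2norm (poly_times_H2 p f)"
proof -
  have "\<forall>k. \<exists>C\<ge>0. \<forall>p. cmod (coeff p k) \<le> C * h2norm (poly_times_H2 p f)"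
    using coeff_lower[OF f] by blast
  then obtain Cf where Cf: "\<And>k. Cf k \<ge> 0 \<and> (\<forall>p. cmod (coeff p k) \<le> Cf k * h2norm (poly_times_H2 p f))"
    by metis
  have "Lnrm n p \<le> (\<Sum>k\<le>n. Cf k) * h2norm (poly_times_H2 p f)" for p
    unfolding Lnrm_def sum_distrib_right using Cf by (intro sum_mono) auto
  moreover have "(\<Sum>k\<le>n. Cf k) \<ge> 0" using Cf by (intro sum_nonneg) auto
  ultimately show ?thesis by blast
qed

lemma pt_inj:
  assumes f: "f \<in> H2" "f \<noteq> (\<lambda>_. 0)" and h: "h2norm (poly_times_H2 p f) = 0"
  shows "p = 0"
proof (rule poly_eqI)
  fix k
  obtain C where "\<forall>p. cmod (coeff p k) \<le> C * h2norm (poly_times_H2 p f)"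
    using coeff_lower[OF f] by blast
  then have "cmod (coeff p k) \<le> 0" using h by (metis mult_zero_right)
  then show "coeff p k = coeff 0 k" by simp
qed



definition Tf :: "complex poly \<Rightarrow> (nat \<Rightarrow> complex) \<Rightarrow> nat \<Rightarrow> complex" where
  "Tf q f = (\<lambda>k. poly_times_H2 q f k - H2_one k)"

definition Er :: "(nat \<Rightarrow> complex) \<Rightarrow> complex poly \<Rightarrow> real" where
  "Er f q = h2norm (Tf q f)"

lemma Tf_H2: "f \<in> H2 \<Longrightarrow> Tf q f \<in> H2"
  unfolding Tf_def by (rule h2_diff(1)[OF pt_H2 h2_one(1)])

lemma Er_nonneg: "f \<in> H2 \<Longrightarrow> 0 \<le> Er f q"
  unfolding Er_def by (rule h2_nonneg[OF Tf_H2])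

lemma Tf_diff: "(\<lambda>k. Tf p f k - Tf q f k) = poly_times_H2 (p - q) f"
  unfolding Tf_def pt_diff by simp

lemma Tf_add_pt: "Tf p f = (\<lambda>k. Tf q f k + poly_times_H2 (p - q) f k)"
  unfolding Tf_def pt_diff by simp

lemma Er_tri:
  assumes "f \<in> H2"
  shows "Er f p \<le> Er f q + h2norm (poly_times_H2 (p - q) f)"
  unfolding Er_def using h2_add(2)[OF Tf_H2[OF assms, of q] pt_H2[OF assms, of "p - q"]]
  by (simp add: Tf_add_pt[of p f q, symmetric])

lemma PG:
  assumes f: "f \<in> H2" and p: "degree p \<le> n" and q: "degree q \<le> n"
    and m: "\<And>c. degree c \<le> n \<Longrightarrow> m \<le> Er f c" and m0: "0 \<le> m"
  shows "(h2norm (poly_times_H2 (p - q) f))^2 \<le> 2 * (Er f p)^2 + 2 * (Er f q)^2 - 4 * m^2"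
proof -
  define a where "a = Tf p f"
  define b where "b = Tf q f"
  have aH: "a \<in> H2" and bH: "b \<in> H2" unfolding a_def b_def using Tf_H2[OF f] by auto
  define c where "c = smult (1/2) (p + q)"
  have dc: "degree c \<le> n" unfolding c_def
    using degree_add_le[OF p q] degree_smult_le[of "1/2" "p + q"] by linarith
  have "(\<lambda>k. a k + b k) = (\<lambda>k. 2 * Tf c f k)"
    unfolding a_def b_def c_def Tf_def pt_smult pt_add by (simp add: algebra_simps)
  then have "h2norm (\<lambda>k. a k + b k) = 2 * Er f c"
    unfolding Er_def using h2_scale(2)[OF Tf_H2[OF f, of c], of 2] by simp
  then have s: "h2norm (\<lambda>k. a k + b k) \<ge> 2 * m" using m[OF dc] by simp
  have d: "h2norm (\<lambda>k. a k - b k) = h2norm (poly_times_H2 (p - q) f)"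
    unfolding a_def b_def Tf_diff ..
  have "(2 * m)^2 \<le> (h2norm (\<lambda>k. a k + b k))^2"
    using s m0 by (intro power_mono) auto
  then show ?thesis
    using h2_parallel[OF aH bH] d unfolding a_def b_def Er_def by (simp add: power_mult_distrib)
qed

lemma ex_min:
  assumes f: "f \<in> H2" "f \<noteq> (\<lambda>_. 0)"
  shows "\<exists>q. degree q \<le> n \<and> (\<forall>p. degree p \<le> n \<longrightarrow> Er f q \<le> Er f p)"
proof -
  define S where "S = Er f ` {p. degree p \<le> n}"
  define m where "m = Inf S"
  have "Er f 0 \<in> S" unfolding S_def by (rule imageI) simp
  then have Sne: "S \<noteq> {}" by blast
  have Sbdd: "bdd_below S" unfolding S_def
    by (rule bdd_belowI[where m=0]) (use Er_nonneg[OF f(1)] in auto)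
  have mle: "\<And>c. degree c \<le> n \<Longrightarrow> m \<le> Er f c"
    unfolding m_def S_def using Sbdd[unfolded S_def] by (auto intro: cInf_lower)
  have m0: "0 \<le> m" unfolding m_def using Sne Er_nonneg[OF f(1)] by (auto simp: S_def intro!: cInf_greatest)
  have "\<forall>j. \<exists>p. degree p \<le> n \<and> Er f p < m + 1 / (real j + 1)"
  proof
    fix j
    have "Inf S < m + 1 / (real j + 1)" unfolding m_def by simp
    then obtain x where "x \<in> S" "x < m + 1 / (real j + 1)" using cInf_lessD[OF Sne] by blast
    then show "\<exists>p. degree p \<le> n \<and> Er f p < m + 1 / (real j + 1)" unfolding S_def by auto
  qed
  then obtain P where P: "\<And>j. degree (P j) \<le> n" "\<And>j. Er f (P j) < m + 1 / (real j + 1)"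
    by metis
  obtain C where C0: "C \<ge> 0" and C: "\<And>p. Lnrm n p \<le> C * h2norm (poly_times_H2 p f)"
    using Ln_lower[OF f] by blast
  have PN: "Er f (P i) \<le> m + 1 / (real N + 1)" if "N \<le> i" for i N
  proof -
    have "1 / (real i + 1) \<le> 1 / (real N + 1)" using that by (simp add: frac_le)
    then show ?thesis using P(2)[of i] by linarith
  qed
  have diffb: "(h2norm (poly_times_H2 (P i - P j) f))^2 \<le> (8 * m + 4) / (real N + 1)"
    if "N \<le> i" "N \<le> j" for i j N
  proof -
    define t where "t = 1 / (real N + 1)"
    have t0: "0 < t" "t \<le> 1" unfolding t_def by auto
    have "(Er f (P i))^2 \<le> (m + t)^2" "(Er f (P j))^2 \<le> (m + t)^2"
      using PN[OF that(1)] PN[OF that(2)] Er_nonneg[OF f(1)] unfolding t_def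
      by (auto intro!: power_mono)
    moreover have "(h2norm (poly_times_H2 (P i - P j) f))^2 \<le> 2 * (Er f (P i))^2 + 2 * (Er f (P j))^2 - 4 * m^2"
      by (rule PG[OF f(1) P(1) P(1) mle m0])
    ultimately have "(h2norm (poly_times_H2 (P i - P j) f))^2 \<le> 8 * m * t + 4 * t * t"
      by (simp add: power2_eq_square algebra_simps)
    also have "\<dots> \<le> (8 * m + 4) * t" using t0 m0 by (simp add: algebra_simps mult_left_le)
    finally show ?thesis unfolding t_def by simp
  qed
  have cauchy: "Cauchy (\<lambda>j. coeff (P j) k)" for k
  proof (rule metric_CauchyI)
    fix e :: real assume e: "0 < e"
    obtain N where N: "C^2 * (8 * m + 4) / e^2 < real N" using reals_Archimedean2 by blast
    have "dist (coeff (P i) k) (coeff (P j) k) < e" if "N \<le> i" "N \<le> j" for i j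
    proof (cases "k \<le> n")
      case False
      then have "coeff (P i) k = 0" "coeff (P j) k = 0"
        using P(1)[of i] P(1)[of j] by (auto intro!: coeff_eq_0)
      then show ?thesis using e by simp
    next
      case True
      have "dist (coeff (P i) k) (coeff (P j) k) = cmod (coeff (P i - P j) k)"
        by (simp add: dist_norm)
      also have "\<dots> \<le> Lnrm n (P i - P j)" unfolding Lnrm_def
        using True by (intro member_le_sum) auto
      also have "\<dots> \<le> C * h2norm (poly_times_H2 (P i - P j) f)" by (rule C)
      finally have d: "dist (coeff (P i) k) (coeff (P j) k) \<le> C * h2norm (poly_times_H2 (P i - P j) f)" .
      have hn: "0 \<le> h2norm (poly_times_H2 (P i - P j) f)" by (rule h2_nonneg[OF pt_H2[OF f(1)]])
      have "(dist (coeff (P i) k) (coeff (P j) k))^2 \<le> (C * h2norm (poly_times_H2 (P i - P j) f))^2"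
        using d by (intro power_mono) auto
      also have "\<dots> = C^2 * (h2norm (poly_times_H2 (P i - P j) f))^2" by (simp add: power_mult_distrib)
      also have "\<dots> \<le> C^2 * ((8 * m + 4) / (real N + 1))"
        using diffb[OF that] by (intro mult_left_mono) auto
      also have "\<dots> < e^2"
      proof -
        have "C^2 * (8 * m + 4) < e^2 * (real N + 1)"
          using N e by (simp add: field_simps) (smt (verit) m0 mult_nonneg_nonneg zero_le_power2)
        then show ?thesis by (simp add: field_simps)
      qed
      finally show ?thesis using e by (meson power_less_imp_less_base less_le)
    qed
    then show "\<exists>M. \<forall>i\<ge>M. \<forall>j\<ge>M. dist (coeff (P i) k) (coeff (P j) k) < e" by blast
  qed
  define c where "c k = lim (\<lambda>j. coeff (P j) k)" for k
  have lc: "(\<lambda>j. coeff (P j) k) \<longlonglongrightarrow> c k" for k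
    unfolding c_def using cauchy[of k] by (simp add: Cauchy_convergent_iff convergent_LIMSEQ_iff)
  define Q where "Q = (\<Sum>k\<le>n. monom (c k) k)"
  have cQ: "coeff Q i = (if i \<le> n then c i else 0)" for i
    unfolding Q_def by (simp add: coeff_sum coeff_monom)
  have dQ: "degree Q \<le> n" by (rule degree_le) (simp add: cQ)
  have LnQ: "(\<lambda>j. Lnrm n (Q - P j)) \<longlonglongrightarrow> 0"
  proof -
    have "(\<lambda>j. \<Sum>k\<le>n. cmod (c k - coeff (P j) k)) \<longlonglongrightarrow> (\<Sum>k\<le>n. cmod (c k - c k))"
      by (intro tendsto_sum tendsto_norm tendsto_diff tendsto_const lc)
    then show ?thesis unfolding Lnrm_def by (simp add: cQ)
  qed
  have ub: "Er f Q \<le> m + 1 / (real j + 1) + Lnrm n (Q - P j) * h2norm f" for j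
  proof -
    have "Er f Q \<le> Er f (P j) + h2norm (poly_times_H2 (Q - P j) f)" by (rule Er_tri[OF f(1)])
    also have "\<dots> \<le> Er f (P j) + Lnrm n (Q - P j) * h2norm f"
      using pt_bound(2)[OF f(1), of "Q - P j" n] dQ P(1)[of j]
      by (simp add: degree_diff_le)
    finally show ?thesis using P(2)[of j] by linarith
  qed
  have i0: "(\<lambda>j. 1 / (real j + 1)) \<longlonglongrightarrow> 0"
    using LIMSEQ_inverse_real_of_nat by (simp add: divide_inverse add.commute)
  have lim: "(\<lambda>j. m + 1 / (real j + 1) + Lnrm n (Q - P j) * h2norm f) \<longlonglongrightarrow> m + 0 + 0 * h2norm f"
    by (intro tendsto_add tendsto_mult tendsto_const LnQ i0)
  have "Er f Q \<le> m"
    using lim ub by (intro LIMSEQ_le_const) (auto simp: eventually_sequentially) 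
  then show ?thesis using dQ mle by (meson order_trans)
qed



lemma opa_spec:
  assumes f: "f \<in> H2_star"
  shows "degree (opa n f) \<le> n \<and> (\<forall>p. degree p \<le> n \<longrightarrow> Er f (opa n f) \<le> Er f p)"
proof -
  have fH: "f \<in> H2" "f \<noteq> (\<lambda>_. 0)" using f by (auto simp: H2_star_def)
  define P where "P q \<longleftrightarrow> degree q \<le> n \<and> (\<forall>p. degree p \<le> n \<longrightarrow> Er f q \<le> Er f p)" for q
  have eq: "opa n f = (THE q. P q)" unfolding opa_def P_def Er_def Tf_def ..
  have uniq: "q1 = q2" if "P q1" "P q2" for q1 q2
  proof -
    have d: "degree q1 \<le> n" "degree q2 \<le> n" using that unfolding P_def by auto
    have e: "Er f q1 = Er f q2" using that d unfolding P_def by (meson order_antisym)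
    have "(h2norm (poly_times_H2 (q2 - q1) f))^2 \<le> 2 * (Er f q2)^2 + 2 * (Er f q1)^2 - 4 * (Er f q1)^2"
      by (rule PG[OF fH(1) d(2) d(1)]) (use that Er_nonneg[OF fH(1)] in \<open>auto simp: P_def\<close>)
    then have "(h2norm (poly_times_H2 (q2 - q1) f))^2 \<le> 0" using e by simp
    then have "h2norm (poly_times_H2 (q2 - q1) f) = 0" by simp
    then have "q2 - q1 = 0" by (rule pt_inj[OF fH])
    then show ?thesis by simp
  qed
  obtain q where "P q" using ex_min[OF fH, of n] unfolding P_def by blast
  then have "\<exists>!q. P q" using uniq by blast
  then have "P (THE q. P q)" by (rule theI')
  then show ?thesis unfolding eq P_def .
qed

lemma Er_change:
  assumes f: "f \<in> H2" and g: "g \<in> H2" and p: "degree p \<le> n"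
  shows "Er f p \<le> Er g p + Lnrm n p * h2norm (\<lambda>k. f k - g k)"
proof -
  have fg: "(\<lambda>k. f k - g k) \<in> H2" by (rule h2_diff(1)[OF f g])
  have "Tf p f = (\<lambda>k. Tf p g k + poly_times_H2 p (\<lambda>k. f k - g k) k)"
    unfolding Tf_def pt_diff2 by simp
  then have "Er f p \<le> Er g p + h2norm (poly_times_H2 p (\<lambda>k. f k - g k))"
    unfolding Er_def using h2_add(2)[OF Tf_H2[OF g, of p] pt_H2[OF fg, of p]] by simp
  also have "\<dots> \<le> Er g p + Lnrm n p * h2norm (\<lambda>k. f k - g k)"
    using pt_bound(2)[OF fg p] by simp
  finally show ?thesis .
qed

lemma pt_change:
  assumes f: "f \<in> H2" and g: "g \<in> H2" and p: "degree p \<le> n"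
  shows "h2norm (poly_times_H2 p f) \<le> h2norm (poly_times_H2 p g) + Lnrm n p * h2norm (\<lambda>k. f k - g k)"
proof -
  have fg: "(\<lambda>k. f k - g k) \<in> H2" by (rule h2_diff(1)[OF f g])
  have "poly_times_H2 p f = (\<lambda>k. poly_times_H2 p g k + poly_times_H2 p (\<lambda>k. f k - g k) k)"
    unfolding pt_diff2 by simp
  then have "h2norm (poly_times_H2 p f) \<le> h2norm (poly_times_H2 p g) + h2norm (poly_times_H2 p (\<lambda>k. f k - g k))"
    using h2_add(2)[OF pt_H2[OF g, of p] pt_H2[OF fg, of p]] by simp
  also have "\<dots> \<le> h2norm (poly_times_H2 p g) + Lnrm n p * h2norm (\<lambda>k. f k - g k)"
    using pt_bound(2)[OF fg p] by simp
  finally show ?thesis .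
qed

lemma Er_zero: "Er f 0 = 1"
proof -
  have "Tf 0 f = (\<lambda>k. - H2_one k)" unfolding Tf_def pt_zero by simp
  then show ?thesis unfolding Er_def using h2_uminus[OF h2_one(1)] h2_one(2) by simp
qed

lemma pt_le_Er:
  assumes f: "f \<in> H2"
  shows "h2norm (poly_times_H2 p f) \<le> Er f p + 1"
proof -
  have "poly_times_H2 p f = (\<lambda>k. Tf p f k + H2_one k)" unfolding Tf_def by simp
  then show ?thesis unfolding Er_def using h2_add(2)[OF Tf_H2[OF f, of p] h2_one(1)] h2_one(2) by simp
qed

lemma poly_bound:
  assumes "degree r \<le> n" "cmod z \<le> R"
  shows "cmod (poly r z) \<le> (max 1 R)^n * Lnrm n r"
proof -
  have "poly r z = (\<Sum>i\<le>n. coeff r i * z ^ i)"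
  proof -
    have "poly r z = (\<Sum>i\<le>degree r. coeff r i * z ^ i)" by (rule poly_altdef)
    also have "\<dots> = (\<Sum>i\<le>n. coeff r i * z ^ i)"
    proof -
      have zz: "\<forall>i\<in>{..n} - {..degree r}. coeff r i * z ^ i = 0" by (auto simp: coeff_eq_0)
      show ?thesis using sum.mono_neutral_right[of "{..n}" "{..degree r}", OF _ _ zz] assms(1) by auto
    qed
    finally show ?thesis .
  qed
  also have "cmod \<dots> \<le> (\<Sum>i\<le>n. cmod (coeff r i) * cmod z ^ i)"
    by (rule order_trans[OF norm_sum]) (simp add: norm_mult norm_power)
  also have "\<dots> \<le> (\<Sum>i\<le>n. cmod (coeff r i) * (max 1 R)^n)"
  proof (intro sum_mono mult_left_mono)
    fix i assume "i \<in> {..n}"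
    then have "cmod z ^ i \<le> (max 1 R) ^ i" using assms(2) by (intro power_mono) auto
    also have "\<dots> \<le> (max 1 R) ^ n" using \<open>i \<in> {..n}\<close> by (intro power_increasing) auto
    finally show "cmod z ^ i \<le> (max 1 R) ^ n" .
  qed auto
  also have "\<dots> = (max 1 R)^n * Lnrm n r" unfolding Lnrm_def sum_distrib_left by (simp add: mult.commute)
  finally show ?thesis .
qed



theorem proposition2p1:
  fixes n :: nat and K :: "complex set"
  assumes "compact K"
  shows "\<forall>f\<in>H2_star. \<forall>\<epsilon>>0. \<exists>\<delta>>0. \<forall>g\<in>H2_star.
           h2norm (\<lambda>k. g k - f k) < \<delta> \<longrightarrow>
           (\<forall>z\<in>K. cmod (poly (opa n g) z - poly (opa n f) z) < \<epsilon>)"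
proof (intro ballI allI impI)
  fix f :: "nat \<Rightarrow> complex" and \<epsilon> :: real
  assume fs: "f \<in> H2_star" and e: "0 < \<epsilon>"
  have fH: "f \<in> H2" "f \<noteq> (\<lambda>_. 0)" using fs by (auto simp: H2_star_def)
  define q where "q = opa n f"
  have q: "degree q \<le> n" "\<And>p. degree p \<le> n \<Longrightarrow> Er f q \<le> Er f p"
    using opa_spec[OF fs, of n] unfolding q_def by auto
  define m where "m = Er f q"
  have m0: "0 \<le> m" unfolding m_def by (rule Er_nonneg[OF fH(1)])
  have m1: "m \<le> 1" unfolding m_def using q(2)[of 0] Er_zero by simp
  obtain C where C0: "C \<ge> 0" and C: "\<And>p. Lnrm n p \<le> C * h2norm (poly_times_H2 p f)"
    using Ln_lower[OF fH] by blast
  obtain R where R: "\<And>z. z \<in> K \<Longrightarrow> cmod z \<le> R"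
    using compact_imp_bounded[OF assms] unfolding bounded_iff by blast
  define B where "B = (max 1 R)^n"
  have B0: "B \<ge> 0" unfolding B_def by simp
  define K0 where "K0 = 60 * B^2 * C^3 + C + 1"
  have BC: "0 \<le> 60 * B^2 * C^3" using B0 C0 by simp
  have K0: "K0 > 0" "C \<le> K0" "60 * B^2 * C^3 \<le> K0" unfolding K0_def using BC C0 by (linarith)+
  define \<delta> where "\<delta> = min (1 / (2 * K0)) (\<epsilon>^2 / (2 * K0))"
  have \<delta>0: "\<delta> > 0" unfolding \<delta>_def using K0 e by auto
  show "\<exists>\<delta>>0. \<forall>g\<in>H2_star. h2norm (\<lambda>k. g k - f k) < \<delta> \<longrightarrow>
           (\<forall>z\<in>K. cmod (poly (opa n g) z - poly (opa n f) z) < \<epsilon>)"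
  proof (intro exI[of _ \<delta>] conjI \<delta>0 ballI impI)
    fix g z assume gs: "g \<in> H2_star" and dg: "h2norm (\<lambda>k. g k - f k) < \<delta>" and z: "z \<in> K"
    have gH: "g \<in> H2" using gs by (auto simp: H2_star_def)
    define d where "d = h2norm (\<lambda>k. g k - f k)"
    have d0: "0 \<le> d" unfolding d_def by (rule h2_nonneg[OF h2_diff(1)[OF gH fH(1)]])
    have d': "h2norm (\<lambda>k. f k - g k) = d" unfolding d_def by (rule h2_commute)
    have dd: "d < \<delta>" using dg unfolding d_def .
    have Cd: "C * d \<le> 1/2"
    proof -
      have "C * d \<le> K0 * (1 / (2 * K0))"
        using dd K0 C0 d0 unfolding \<delta>_def by (intro mult_mono) auto
      then show ?thesis using K0 by simp
    qed
    define p where "p = opa n g"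
    have p: "degree p \<le> n" "\<And>r. degree r \<le> n \<Longrightarrow> Er g p \<le> Er g r"
      using opa_spec[OF gs, of n] unfolding p_def by auto
    have Egp: "Er g p \<le> 1" using p(2)[of 0] Er_zero by simp
    define Lp where "Lp = Lnrm n p"
    define Lq where "Lq = Lnrm n q"
    have Lp0: "0 \<le> Lp" "0 \<le> Lq" unfolding Lp_def Lq_def by (rule Ln_nonneg)+
    have "h2norm (poly_times_H2 p f) \<le> h2norm (poly_times_H2 p g) + Lp * d"
      using pt_change[OF fH(1) gH p(1)] d' unfolding Lp_def by simp
    also have "\<dots> \<le> 2 + Lp * d" using pt_le_Er[OF gH, of p] Egp by simp
    finally have "Lp \<le> C * (2 + Lp * d)"
      using C[of p] C0 unfolding Lp_def by (meson mult_left_mono order_trans)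
    then have "Lp \<le> 2 * C + (C * d) * Lp" by (simp add: algebra_simps)
    also have "\<dots> \<le> 2 * C + (1/2) * Lp" using Cd Lp0 by (intro add_left_mono mult_right_mono) auto
    finally have Lp: "Lp \<le> 4 * C" by simp
    have Lq: "Lq \<le> 2 * C"
    proof -
      have "Lq \<le> C * h2norm (poly_times_H2 q f)" unfolding Lq_def by (rule C)
      also have "\<dots> \<le> C * (m + 1)" using pt_le_Er[OF fH(1), of q] C0 unfolding m_def
        by (intro mult_left_mono) auto
      also have "\<dots> \<le> C * 2" using m1 C0 by (intro mult_left_mono) auto
      finally show ?thesis by simp
    qed
    have "Er f p \<le> Er g p + Lp * d"
      using Er_change[OF fH(1) gH p(1)] d' unfolding Lp_def by simp
    also have "Er g p \<le> Er g q" by (rule p(2)[OF q(1)])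
    also have "Er g q \<le> m + Lq * d"
      using Er_change[OF gH fH(1) q(1)] unfolding Lq_def m_def d_def by simp
    finally have "Er f p \<le> m + (Lp + Lq) * d" by (simp add: algebra_simps)
    also have "\<dots> \<le> m + 6 * (C * d)"
    proof -
      have "(Lp + Lq) * d \<le> (6 * C) * d" by (rule mult_right_mono) (use Lp Lq d0 in linarith)+
      then show ?thesis by (simp add: mult.assoc)
    qed
    finally have Efp: "Er f p \<le> m + 6 * (C * d)" .
    have "(h2norm (poly_times_H2 (p - q) f))^2 \<le> 2 * (Er f p)^2 + 2 * (Er f q)^2 - 4 * m^2"
      by (rule PG[OF fH(1) p(1) q(1)]) (use q(2) m0 in \<open>auto simp: m_def\<close>)
    also have "\<dots> = 2 * ((Er f p)^2 - m^2)" unfolding m_def by simp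
    also have "\<dots> \<le> 2 * ((m + 6 * (C * d))^2 - m^2)"
      using Efp Er_nonneg[OF fH(1), of p] by (intro mult_left_mono diff_right_mono power_mono) auto
    also have "\<dots> = 24 * m * (C * d) + 72 * (C * d)^2" by (simp add: power2_eq_square algebra_simps)
    also have "\<dots> \<le> 24 * (C * d) + 36 * (C * d)"
    proof -
      have t0: "0 \<le> C * d" using C0 d0 by simp
      have "m * (C * d) \<le> 1 * (C * d)" by (rule mult_right_mono) (use m1 t0 in linarith)+
      moreover have "(C * d) * (C * d) \<le> (1/2) * (C * d)" by (rule mult_right_mono) (use Cd t0 in linarith)+
      ultimately show ?thesis by (simp add: power2_eq_square)
    qed
    finally have rf: "(h2norm (poly_times_H2 (p - q) f))^2 \<le> 60 * (C * d)" by simp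
    have dr: "degree (p - q) \<le> n" using p(1) q(1) by (meson degree_diff_le)
    have pb: "cmod (poly (p - q) z) \<le> B * (C * h2norm (poly_times_H2 (p - q) f))"
      using poly_bound[OF dr R[OF z]] C[of "p - q"] B0 unfolding B_def
      by (meson mult_left_mono order_trans)
    have hn: "0 \<le> h2norm (poly_times_H2 (p - q) f)" by (rule h2_nonneg[OF pt_H2[OF fH(1)]])
    have "(cmod (poly (p - q) z))^2 \<le> (B * (C * h2norm (poly_times_H2 (p - q) f)))^2"
      using pb by (intro power_mono) auto
    also have "\<dots> = B^2 * C^2 * (h2norm (poly_times_H2 (p - q) f))^2" by (simp add: power_mult_distrib)
    also have "\<dots> \<le> B^2 * C^2 * (60 * (C * d))" using rf by (intro mult_left_mono) auto
    also have "\<dots> = (60 * B^2 * C^3) * d" by (simp add: power2_eq_square power3_eq_cube algebra_simps)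
    also have "\<dots> \<le> K0 * (\<epsilon>^2 / (2 * K0))"
      using K0 dd d0 unfolding \<delta>_def by (intro mult_mono) auto
    also have "\<dots> < \<epsilon>^2" using K0 e by simp
    finally have "cmod (poly (p - q) z) < \<epsilon>" using e by (meson power_less_imp_less_base less_le)
    then show "cmod (poly (opa n g) z - poly (opa n f) z) < \<epsilon>"
      unfolding p_def[symmetric] q_def[symmetric] by (simp add: poly_diff)
  qed
qed


end
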